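(* If two NFAs $\mathcal{A}_1$ and $\mathcal{A}_2$ over a finite alphabet $A$ both admit a $(\vec u,\vec B)$-path for the same factorization pattern $(\vec u,\vec B)$, then $L(\mathcal{A}_1)$ and $L(\mathcal{A}_2)$ are not PT-separable.
   Context: Piecewise testable (PT) languages over $A$ are finite Boolean combinations of languages $A^*a_1A^*\cdots A^*a_nA^*$ ($a_i\in A$); $L_1,L_2$ are PT-separable if some PT language $L$ satisfies $L_1\subseteq L$ and $L\cap L_2=\varnothing$. For states $p,q$ and $B\subseteq A$: $p\xrightarrow{\subseteq B}q$ denotes a path (possibly empty) from $p$ to $q$ with all transition labels in $B$; $p\xrightarrow{=B}q$ denotes such a path in which every letter of $B$ occurs. A factorization pattern is $(\vec u,\vec B)$ with $\vec u=(u_0,\dots,u_p)\in (A^* )^{p+1}$ and $\vec B=(B_1,\dots,B_p)$ nonempty subsets of $A$. A $(\vec u,\vec B)$-path is a path from an initial to a final state of the form $s_0\xrightarrow{u_0}p_1\xrightarrow{\subseteq B_1}q_1\xrightarrow{=B_1}q_1\xrightarrow{\subseteq B_1}r_1\xrightarrow{u_1}\cdots\xrightarrow{u_{p-1}}p_p\xrightarrow{\subseteq B_p}q_p\xrightarrow{=B_p}q_p\xrightarrow{\subseteq B_p}r_p\xrightarrow{u_p}f$. *)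

theory Defs
  imports Main
begin

record ('q, 'a) nfa =
  states :: "'q set"
  init   :: "'q set"
  final  :: "'q set"
  trans  :: "('q \<times> 'a \<times> 'q) set"

definition wf_nfa :: "'a set \<Rightarrow> ('q, 'a) nfa \<Rightarrow> bool" where
  "wf_nfa A N \<longleftrightarrow> finite (states N) \<and> init N \<subseteq> states N \<and> final N \<subseteq> states N
     \<and> trans N \<subseteq> states N \<times> A \<times> states N"

inductive steps :: "('q, 'a) nfa \<Rightarrow> 'q \<Rightarrow> 'a list \<Rightarrow> 'q \<Rightarrow> bool" for N where
  steps_nil: "steps N p [] p"
| steps_cons: "(p, a, p') \<in> trans N \<Longrightarrow> steps N p' w q \<Longrightarrow> steps N p (a # w) q"

definition lang :: "('q, 'a) nfa \<Rightarrow> 'a list set" where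
  "lang N = {w. \<exists>s\<in>init N. \<exists>f\<in>final N. steps N s w f}"

definition path_sub :: "('q, 'a) nfa \<Rightarrow> 'a set \<Rightarrow> 'q \<Rightarrow> 'q \<Rightarrow> bool" where
  "path_sub N B p q \<longleftrightarrow> (\<exists>w. set w \<subseteq> B \<and> steps N p w q)"

definition path_eq :: "('q, 'a) nfa \<Rightarrow> 'a set \<Rightarrow> 'q \<Rightarrow> 'q \<Rightarrow> bool" where
  "path_eq N B p q \<longleftrightarrow> (\<exists>w. set w = B \<and> steps N p w q)"

definition fact_pattern :: "'a set \<Rightarrow> 'a list list \<Rightarrow> 'a set list \<Rightarrow> bool" where
  "fact_pattern A us Bs \<longleftrightarrow> length us = length Bs + 1 \<and> (\<forall>u\<in>set us. set u \<subseteq> A)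
     \<and> (\<forall>B\<in>set Bs. B \<noteq> {} \<and> B \<subseteq> A)"

fun pat_path :: "('q, 'a) nfa \<Rightarrow> 'q \<Rightarrow> 'a list list \<Rightarrow> 'a set list \<Rightarrow> 'q \<Rightarrow> bool" where
  "pat_path N s [u] [] f = steps N s u f"
| "pat_path N s (u # us) (B # Bs) f =
     (\<exists>p q r. steps N s u p \<and> path_sub N B p q \<and> path_eq N B q q \<and> path_sub N B q r
        \<and> pat_path N r us Bs f)"
| "pat_path N s _ _ f = False"

definition has_pattern_path :: "('q, 'a) nfa \<Rightarrow> 'a list list \<Rightarrow> 'a set list \<Rightarrow> bool" where
  "has_pattern_path N us Bs \<longleftrightarrow> (\<exists>s\<in>init N. \<exists>f\<in>final N. pat_path N s us Bs f)"

fun piece :: "'a set \<Rightarrow> 'a list \<Rightarrow> 'a list set" where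
  "piece A [] = lists A"
| "piece A (a # as) = {v @ [a] @ w | v w. v \<in> lists A \<and> w \<in> piece A as}"

inductive_set PT :: "'a set \<Rightarrow> 'a list set set" for A where
  PT_piece: "set as \<subseteq> A \<Longrightarrow> piece A as \<in> PT A"
| PT_compl: "L \<in> PT A \<Longrightarrow> lists A - L \<in> PT A"
| PT_union: "L1 \<in> PT A \<Longrightarrow> L2 \<in> PT A \<Longrightarrow> L1 \<union> L2 \<in> PT A"
| PT_inter: "L1 \<in> PT A \<Longrightarrow> L2 \<in> PT A \<Longrightarrow> L1 \<inter> L2 \<in> PT A"

definition PT_separable :: "'a set \<Rightarrow> 'a list set \<Rightarrow> 'a list set \<Rightarrow> bool" where
  "PT_separable A L1 L2 \<longleftrightarrow> (\<exists>L\<in>PT A. L1 \<subseteq> L \<and> L \<inter> L2 = {})"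

end

theory Submission
  imports Defs "HOL-Library.Sublist"
begin

definition eqk :: "nat \<Rightarrow> 'a list \<Rightarrow> 'a list \<Rightarrow> bool" where
  "eqk k w w' \<longleftrightarrow> (\<forall>z. length z \<le> k \<longrightarrow> (subseq z w \<longleftrightarrow> subseq z w'))"

lemma eqk_mono: "eqk k w w' \<Longrightarrow> j \<le> k \<Longrightarrow> eqk j w w'"
  unfolding eqk_def by auto

lemma eqk_append:
  assumes "eqk k a a'" "eqk k b b'"
  shows "eqk k (a @ b) (a' @ b')"
  unfolding eqk_def
proof (intro allI impI)
  fix z :: "'a list" assume z: "length z \<le> k"
  have "subseq z (a@b) \<longleftrightarrow> (\<exists>z1 z2. z = z1 @ z2 \<and> subseq z1 a \<and> subseq z2 b)"
    by (rule subseq_append_iff)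
  also have "\<dots> \<longleftrightarrow> (\<exists>z1 z2. z = z1 @ z2 \<and> subseq z1 a' \<and> subseq z2 b')"
  proof -
    have "z = z1 @ z2 \<Longrightarrow> (subseq z1 a \<longleftrightarrow> subseq z1 a') \<and> (subseq z2 b \<longleftrightarrow> subseq z2 b')" for z1 z2
      using assms z unfolding eqk_def by simp
    then show ?thesis by blast
  qed
  also have "\<dots> \<longleftrightarrow> subseq z (a'@b')" by (rule subseq_append_iff[symmetric])
  finally show "subseq z (a@b) \<longleftrightarrow> subseq z (a'@b')" .
qed

lemma subseq_pow: "set z \<subseteq> set v \<Longrightarrow> subseq z (concat (replicate (length z) v))"
proof (induction z)
  case Nil then show ?case by simp
next
  case (Cons a z)
  have "subseq [a] v" using Cons.prems by (simp add: subseq_singleton_left)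
  moreover have "subseq z (concat (replicate (length z) v))" using Cons by auto
  ultimately show ?case using list_emb_append_mono[of "(=)" "[a]" v z] by auto
qed

lemma concat_rep_split: "m \<le> n \<Longrightarrow>
  concat (replicate n v) = concat (replicate m v) @ concat (replicate (n - m) v)"
  by (metis concat_append le_add_diff_inverse replicate_add)

lemma subseq_set: "subseq z w \<Longrightarrow> set z \<subseteq> set w"
  by (induction rule: list_emb.induct) auto

lemma block_subseq:
  assumes "set x \<subseteq> B" "set y \<subseteq> B" "set v = B" "k \<le> n" "length z \<le> k"
  shows "subseq z (x @ concat (replicate n v) @ y) \<longleftrightarrow> set z \<subseteq> B"
proof
  assume "subseq z (x @ concat (replicate n v) @ y)"
  then have "set z \<subseteq> set (x @ concat (replicate n v) @ y)"
    by (rule subseq_set)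
  moreover have "set (concat (replicate n v)) \<subseteq> B" using assms(3) by auto
  ultimately show "set z \<subseteq> B" using assms(1,2) unfolding set_append by blast
next
  assume "set z \<subseteq> B"
  then have "set z \<subseteq> set v" using assms(3) by simp
  then have 1: "subseq z (concat (replicate (length z) v))" by (rule subseq_pow)
  have "length z \<le> n" using assms by simp
  then have "concat (replicate n v) = concat (replicate (length z) v) @ concat (replicate (n - length z) v)"
    by (rule concat_rep_split)
  then have "subseq z (concat (replicate n v))"
    using 1 subseq_rev_drop_many by metis
  then show "subseq z (x @ concat (replicate n v) @ y)"
    using subseq_drop_many subseq_rev_drop_many by metis
qed

inductive shape :: "nat \<Rightarrow> 'a list list \<Rightarrow> 'a set list \<Rightarrow> 'a list \<Rightarrow> bool" for k where
  sh1: "shape k [u] [] u"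
| sh2: "set x \<subseteq> B \<Longrightarrow> set y \<subseteq> B \<Longrightarrow> set v = B \<Longrightarrow> shape k us Bs w \<Longrightarrow>
        shape k (u # us) (B # Bs) (u @ (x @ concat (replicate k v) @ y) @ w)"

lemma shape_eqk: "shape k us Bs w \<Longrightarrow> shape k us Bs w' \<Longrightarrow> eqk k w w'"
proof (induction arbitrary: w' rule: shape.induct)
  case (sh1 u)
  then show ?case by (cases rule: shape.cases) (auto simp: eqk_def)
next
  case (sh2 x B y v us Bs w u)
  from sh2.prems show ?case
  proof (cases rule: shape.cases)
    case (sh2 x' y' v' w2)
    have "eqk k (x @ concat (replicate k v) @ y) (x' @ concat (replicate k v') @ y')"
      unfolding eqk_def using block_subseq sh2 \<open>set x \<subseteq> B\<close> \<open>set y \<subseteq> B\<close> \<open>set v = B\<close>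
      by (metis order_refl)
    moreover have "eqk k w w2" using sh2.IH sh2 by auto
    moreover have "eqk k u u" by (simp add: eqk_def)
    ultimately show ?thesis using sh2 eqk_append by metis
  qed
qed

lemma steps_append: "steps N p a q \<Longrightarrow> steps N q b r \<Longrightarrow> steps N p (a @ b) r"
  by (induction rule: steps.induct) (auto intro: steps.intros)

lemma steps_pow: "steps N q v q \<Longrightarrow> steps N q (concat (replicate n v)) q"
  by (induction n) (auto intro: steps.intros steps_append)

lemma pat_shape: "pat_path N s us Bs f \<Longrightarrow> \<exists>w. shape k us Bs w \<and> steps N s w f"
proof (induction N s us Bs f rule: pat_path.induct)
  case (1 N s u f)
  then show ?case by (auto intro: sh1)
next
  case (2 N s u us B Bs f)
  then obtain p q r where h: "steps N s u p" "path_sub N B p q" "path_eq N B q q"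
    "path_sub N B q r" "pat_path N r us Bs f" by auto
  obtain x where x: "set x \<subseteq> B" "steps N p x q" using h(2) path_sub_def by metis
  obtain c where c: "set c = B" "steps N q c q" using h(3) path_eq_def by metis
  obtain y where y: "set y \<subseteq> B" "steps N q y r" using h(4) path_sub_def by metis
  obtain w where w: "shape k us Bs w" "steps N r w f" using 2 h by blast
  have "steps N s (u @ (x @ concat (replicate k c) @ y) @ w) f"
    using h(1) x c y w steps_pow steps_append by metis
  then show ?case using sh2[OF x(1) y(1) c(1) w(1)] by blast
qed auto

lemma steps_lists: "steps N p w q \<Longrightarrow> trans N \<subseteq> S \<times> A \<times> S \<Longrightarrow> w \<in> lists A"
  by (induction rule: steps.induct) auto

lemma piece_char: "set as \<subseteq> A \<Longrightarrow> piece A as = {w \<in> lists A. subseq as w}"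
proof (induction as)
  case Nil then show ?case by auto
next
  case (Cons a as)
  have IH: "piece A as = {w \<in> lists A. subseq as w}" using Cons by simp
  have aA: "a \<in> A" using Cons.prems by simp
  show ?case
  proof (rule set_eqI, rule iffI)
    fix w assume "w \<in> piece A (a # as)"
    then obtain v u where h: "w = v @ [a] @ u" "v \<in> lists A" "u \<in> piece A as"
      by auto
    then have "u \<in> lists A" "subseq as u" using IH by auto
    then have "subseq (a # as) (a # u)" "a # u \<in> lists A" using aA by auto
    then show "w \<in> {w \<in> lists A. subseq (a # as) w}"
      using h subseq_drop_many by fastforce
  next
    fix w assume "w \<in> {w \<in> lists A. subseq (a # as) w}"
    then have w: "w \<in> lists A" "subseq (a # as) w" by auto
    then obtain us b vs where h: "w = us @ b # vs" "a = b" "list_emb (=) as vs"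
      using list_emb_ConsD[of "(=)" a as w] by blast
    then have "us \<in> lists A" "vs \<in> lists A" using w(1) by auto
    then have "vs \<in> piece A as" using IH h(3) by simp
    then show "w \<in> piece A (a # as)" using h \<open>us \<in> lists A\<close> by auto
  qed
qed

lemma PT_inv: "L \<in> PT A \<Longrightarrow> \<exists>k. \<forall>w w'. w \<in> lists A \<longrightarrow> w' \<in> lists A \<longrightarrow> eqk k w w'
   \<longrightarrow> (w \<in> L \<longleftrightarrow> w' \<in> L)"
proof (induction rule: PT.induct)
  case (PT_piece as)
  show ?case using PT_piece by (intro exI[of _ "length as"]) (auto simp: piece_char eqk_def)
next
  case (PT_compl L) then show ?case by blast
next
  case (PT_union L1 L2)
  then obtain k1 k2 where "\<forall>w w'. w \<in> lists A \<longrightarrow> w' \<in> lists A \<longrightarrow> eqk k1 w w' \<longrightarrow> (w \<in> L1 \<longleftrightarrow> w' \<in> L1)"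
    "\<forall>w w'. w \<in> lists A \<longrightarrow> w' \<in> lists A \<longrightarrow> eqk k2 w w' \<longrightarrow> (w \<in> L2 \<longleftrightarrow> w' \<in> L2)" by blast
  moreover have "eqk (max k1 k2) w w' \<Longrightarrow> eqk k1 w w' \<and> eqk k2 w w'" for w w' :: "'a list"
    using eqk_mono by fastforce
  ultimately show ?case by (intro exI[of _ "max k1 k2"]) blast
next
  case (PT_inter L1 L2)
  then obtain k1 k2 where "\<forall>w w'. w \<in> lists A \<longrightarrow> w' \<in> lists A \<longrightarrow> eqk k1 w w' \<longrightarrow> (w \<in> L1 \<longleftrightarrow> w' \<in> L1)"
    "\<forall>w w'. w \<in> lists A \<longrightarrow> w' \<in> lists A \<longrightarrow> eqk k2 w w' \<longrightarrow> (w \<in> L2 \<longleftrightarrow> w' \<in> L2)" by blast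
  moreover have "eqk (max k1 k2) w w' \<Longrightarrow> eqk k1 w w' \<and> eqk k2 w w'" for w w' :: "'a list"
    using eqk_mono by fastforce
  ultimately show ?case by (intro exI[of _ "max k1 k2"]) blast
qed

theorem lemma2:
  fixes A :: "'a set" and N1 :: "('q1, 'a) nfa" and N2 :: "('q2, 'a) nfa"
    and us :: "'a list list" and Bs :: "'a set list"
  assumes "finite A"
    and "wf_nfa A N1" and "wf_nfa A N2"
    and "fact_pattern A us Bs"
    and "has_pattern_path N1 us Bs" and "has_pattern_path N2 us Bs"
  shows "\<not> PT_separable A (lang N1) (lang N2)"
proof
  assume "PT_separable A (lang N1) (lang N2)"
  then obtain L where L: "L \<in> PT A" "lang N1 \<subseteq> L" "L \<inter> lang N2 = {}"
    unfolding PT_separable_def by blast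
  obtain k where k: "\<forall>w w'. w \<in> lists A \<longrightarrow> w' \<in> lists A \<longrightarrow> eqk k w w' \<longrightarrow> (w \<in> L \<longleftrightarrow> w' \<in> L)"
    using PT_inv[OF L(1)] by blast
  obtain s1 f1 where 1: "s1 \<in> init N1" "f1 \<in> final N1" "pat_path N1 s1 us Bs f1"
    using assms(5) has_pattern_path_def by metis
  obtain s2 f2 where 2: "s2 \<in> init N2" "f2 \<in> final N2" "pat_path N2 s2 us Bs f2"
    using assms(6) has_pattern_path_def by metis
  obtain w1 where w1: "shape k us Bs w1" "steps N1 s1 w1 f1" using pat_shape[OF 1(3), of k] by blast
  obtain w2 where w2: "shape k us Bs w2" "steps N2 s2 w2 f2" using pat_shape[OF 2(3), of k] by blast
  have l1: "w1 \<in> lang N1" using 1 w1 lang_def by blast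
  have l2: "w2 \<in> lang N2" using 2 w2 lang_def by blast
  have a1: "w1 \<in> lists A" using w1(2) assms(2) wf_nfa_def steps_lists by metis
  have a2: "w2 \<in> lists A" using w2(2) assms(3) wf_nfa_def steps_lists by metis
  have "eqk k w1 w2" using shape_eqk w1 w2 by blast
  then have "w2 \<in> L" using k a1 a2 l1 L(2) by blast
  then show False using l2 L(3) by blast
qed

end
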